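(* Let $A, B, C, F \in \mathbb{R}^{n\times n}$ with $C$ invertible, and consider the matrix equation $$AX + B\lvert CX\rvert = F$$ in the unknown $X \in \mathbb{R}^{n\times n}$. Let $I$ be the $n\times n$ identity matrix and set $R = I\otimes AC^{-1}$ and $S = I\otimes B$ (matrices of size $n^2\times n^2$). The equation has exactly one solution if any one of the following holds: (i) the set $\{R+S,\ R-S\}$ has the column $\mathcal{W}$-property; (ii) $R+S$ is invertible and the set $\{I_{n^2},\ (R+S)^{-1}(R-S)\}$ has the column $\mathcal{W}$-property, where $I_{n^2}$ is the identity matrix of order $n^2$; (iii) $R+S$ is invertible and $(R+S)^{-1}(R-S)$ is a P-matrix; (iv) for all nonnegative diagonal matrices $F_1, F_2 \in \mathbb{R}^{n^2\times n^2}$ with all diagonal entries of $F_1+F_2$ positive, the matrix $(R+S)F_1 + (R-S)F_2$ is invertible.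
   Context: $\otimes$ denotes the Kronecker product and $\lvert M\rvert$ the entrywise absolute value. For a set $\mathcal{M}=\{M_1,M_2\}$ of $N\times N$ matrices, a column representative of $\mathcal{M}$ is a matrix $R'$ whose $j$-th column is either the $j$-th column of $M_1$ or the $j$-th column of $M_2$, for each $j=1,\dots,N$. The set $\mathcal{M}$ has the column $\mathcal{W}$-property if every column representative of $\mathcal{M}$ has positive determinant. A P-matrix is a square matrix all of whose principal minors are positive. *)

theory Defs
  imports "HOL-Analysis.Analysis"
begin

definition kron :: "real^'n^'n \<Rightarrow> real^'m^'m \<Rightarrow> real^('n \<times> 'm)^('n \<times> 'm)" where
  "kron M N = (\<chi> p q. M $ fst p $ fst q * N $ snd p $ snd q)"

definition mabs :: "real^'n^'m \<Rightarrow> real^'n^'m" where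
  "mabs M = (\<chi> i j. \<bar>M $ i $ j\<bar>)"

definition column_rep :: "real^'n^'n \<Rightarrow> real^'n^'n \<Rightarrow> ('n \<Rightarrow> bool) \<Rightarrow> real^'n^'n" where
  "column_rep M1 M2 s = (\<chi> i j. if s j then M1 $ i $ j else M2 $ i $ j)"

definition column_W_property :: "real^'n^'n \<Rightarrow> real^'n^'n \<Rightarrow> bool" where
  "column_W_property M1 M2 \<longleftrightarrow> (\<forall>s. det (column_rep M1 M2 s) > 0)"

definition principal_minor :: "real^'n^'n \<Rightarrow> 'n set \<Rightarrow> real" where
  "principal_minor M J =
     sum (\<lambda>p. of_int (sign p) * prod (\<lambda>i. M $ i $ p i) J) {p. p permutes J}"

definition P_matrix :: "real^'n^'n \<Rightarrow> bool" where
  "P_matrix M \<longleftrightarrow> (\<forall>J. J \<noteq> {} \<longrightarrow> principal_minor M J > 0)"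

definition nonneg_diagonal :: "real^'n^'n \<Rightarrow> bool" where
  "nonneg_diagonal D \<longleftrightarrow> (\<forall>i j. i \<noteq> j \<longrightarrow> D $ i $ j = 0) \<and> (\<forall>i. D $ i $ i \<ge> 0)"

end

theory Submission
  imports Defs "HOL-Homology.Invariance_of_Domain"
begin


lemma surj_inj_hom:
  fixes g :: "'a::euclidean_space \<Rightarrow> 'a"
  assumes cont: "continuous_on UNIV g" and inj: "inj g"
    and hom: "\<And>t x. t \<ge> 0 \<Longrightarrow> g (t *\<^sub>R x) = t *\<^sub>R g x"
  shows "surj g"
proof -
  have g0: "g 0 = 0" using hom[of 0 0] by simp
  have ne: "sphere (0::'a) 1 \<noteq> {}" by simp
  obtain a where a: "a \<in> sphere 0 1" and amin: "\<And>y. y \<in> sphere 0 1 \<Longrightarrow> norm (g a) \<le> norm (g y)"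
    using continuous_attains_inf[OF compact_sphere ne, of "\<lambda>x. norm (g x)"]
      continuous_on_subset[OF cont] continuous_on_norm by (metis subset_UNIV)
  define m where "m = norm (g a)"
  have "g a \<noteq> 0" using a inj g0 by (metis injD norm_zero mem_sphere_0 zero_neq_one)
  hence mpos: "m > 0" by (simp add: m_def)
  have lb: "m * norm x \<le> norm (g x)" for x
  proof (cases "x = 0")
    case True then show ?thesis by (simp add: g0)
  next
    case False
    have "x = norm x *\<^sub>R ((1 / norm x) *\<^sub>R x)" using False by simp
    hence "g x = norm x *\<^sub>R g ((1 / norm x) *\<^sub>R x)" by (metis hom norm_ge_zero)
    moreover have "(1 / norm x) *\<^sub>R x \<in> sphere 0 1" using False by simp
    ultimately show ?thesis using amin[of "(1 / norm x) *\<^sub>R x"] by (simp add: m_def mult.commute mult_left_mono)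
  qed
  have op: "open (range g)" by (rule invariance_of_domain[OF cont open_UNIV inj])
  have cl: "closed (range g)"
  proof -
    have "y \<in> range g" if y: "y \<in> closure (range g)" for y
    proof -
      define K where "K = (norm y + 1) / m"
      have cpt: "compact (g ` cball 0 K)"
        by (rule compact_continuous_image[OF continuous_on_subset[OF cont] compact_cball]) simp
      have "y \<in> closure (g ` cball 0 K)"
        unfolding closure_approachable
      proof (intro allI impI)
        fix e :: real assume e: "e > 0"
        obtain z where z: "z \<in> range g" "dist z y < min e 1"
          using y e unfolding closure_approachable by (metis min_less_iff_conj zero_less_one)
        then obtain x where x: "z = g x" by auto
        have "norm z \<le> norm y + 1" using z(2) norm_triangle_ineq2[of z y] by (simp add: dist_norm)
        hence "m * norm x \<le> norm y + 1" using lb[of x] x by simp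
        hence "norm x \<le> K" using mpos by (simp add: K_def pos_le_divide_eq mult.commute)
        hence "g x \<in> g ` cball 0 K" by simp
        moreover have "dist (g x) y < e" using z x by simp
        ultimately show "\<exists>z\<in>g ` cball 0 K. dist z y < e" by blast
      qed
      hence "y \<in> g ` cball 0 K" using cpt compact_imp_closed closure_closed by metis
      thus ?thesis by auto
    qed
    thus ?thesis using closure_subset_eq by blast
  qed
  have "range g \<noteq> {}" by simp
  thus ?thesis using clopen[of "range g"] op cl by blast
qed


definition diagm :: "('n \<Rightarrow> real) \<Rightarrow> real^'n^'n" where
  "diagm d = (\<chi> i j. if i = j then d i else 0)"

lemma mul_diagm: "(M::real^'n^'n) ** diagm d = (\<chi> i j. M$i$j * d j)"
  by (simp add: matrix_matrix_mult_def diagm_def vec_eq_iff if_distrib cong: if_cong)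

lemma nonneg_diag_eq: "nonneg_diagonal D \<Longrightarrow> D = diagm (\<lambda>i. D$i$i)"
  by (auto simp: nonneg_diagonal_def diagm_def vec_eq_iff)

lemma det_comb:
  fixes P Q :: "real^'n^'n"
  assumes W: "column_W_property P Q"
    and d: "\<And>j. d1 j \<ge> 0" "\<And>j. d2 j \<ge> 0" "\<And>j. d1 j + d2 j > 0"
  shows "det (\<chi> i j. P$i$j * d1 j + Q$i$j * d2 j) > 0"
proof -
  define w where "w j b = (if b then column j P else column j Q)" for j b
  define mx where "mx j = d1 j *s column j P + d2 j *s column j Q" for j
  define MK where "MK K f = (\<chi> j. if j \<in> K then mx j else w j (f j))" for K and f :: "'n \<Rightarrow> bool"
  have ind: "\<forall>f. det (MK K f) > 0" if "finite K" for K
    using that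
  proof (induction K rule: finite_induct)
    case empty
    have "MK {} f = transpose (column_rep P Q f)" for f
      by (simp add: MK_def vec_eq_iff transpose_def w_def column_def column_rep_def)
    then show ?case using W by (simp add: column_W_property_def)
  next
    case (insert k K)
    show ?case
    proof
      fix f
      let ?c = "\<lambda>j. if j \<in> K then mx j else w j (f j)"
      have e1: "MK (insert k K) f = (\<chi> j. if j = k then d1 k *s column j P + d2 k *s column j Q else ?c j)"
        by (simp add: MK_def mx_def vec_eq_iff)
      have e2: "(\<chi> j. if j = k then column j P else ?c j) = MK K (f(k:=True))"
        using insert.hyps by (simp add: MK_def vec_eq_iff w_def)
      have e3: "(\<chi> j. if j = k then column j Q else ?c j) = MK K (f(k:=False))"
        using insert.hyps by (simp add: MK_def vec_eq_iff w_def)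
      have "det (MK (insert k K) f) = d1 k * det (MK K (f(k:=True))) + d2 k * det (MK K (f(k:=False)))"
        unfolding e1 det_row_add[of k "\<lambda>j. d1 k *s column j P" "\<lambda>j. d2 k *s column j Q"]
          det_row_mul[of k "d1 k" "\<lambda>j. column j P"] det_row_mul[of k "d2 k" "\<lambda>j. column j Q"] e2 e3 by simp
      moreover have "det (MK K (f(k:=True))) > 0" "det (MK K (f(k:=False))) > 0"
        using insert.IH by auto
      ultimately show "det (MK (insert k K) f) > 0"
        using d(1)[of k] d(2)[of k] d(3)[of k]
        by (smt (verit) mult_nonneg_nonneg mult_pos_pos)
    qed
  qed
  have "(\<chi> i j. P$i$j * d1 j + Q$i$j * d2 j) = transpose (MK UNIV f)" for f
    by (simp add: vec_eq_iff transpose_def MK_def mx_def column_def mult.commute)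
  hence "det (\<chi> i j. P$i$j * d1 j + Q$i$j * d2 j) = det (MK UNIV (\<lambda>_. True))"
    by (simp only: det_transpose[of "MK UNIV (\<lambda>_. True)", symmetric])
  then show ?thesis using ind[of UNIV] by simp
qed

lemma det_column_rep_id:
  fixes M :: "real^'n^'n"
  shows "det (column_rep (mat 1) M s) = principal_minor M {j. \<not> s j}"
proof -
  let ?J = "{j. \<not> s j}"
  let ?N = "column_rep (mat 1) M s"
  let ?t = "\<lambda>p. of_int (sign p) * prod (\<lambda>i. ?N$i$p i) UNIV"
  have z: "?t p = 0" if p: "p \<in> {p. p permutes UNIV} - {p. p permutes ?J}" for p
  proof -
    from p have pu: "p permutes UNIV" and npj: "\<not> p permutes ?J" by auto
    then obtain x where x: "x \<notin> ?J" "p x \<noteq> x"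
      using pu unfolding permutes_def by auto
    obtain i where i: "p i = x" using pu by (metis permutes_univ surj_def)
    have "i \<noteq> x" using i x by auto
    hence "?N$i$p i = 0" using i x by (simp add: column_rep_def mat_def)
    thus ?thesis by (metis (no_types, lifting) UNIV_I finite mult_eq_0_iff prod_zero_iff)
  qed
  have eq: "?t p = of_int (sign p) * prod (\<lambda>i. M$i$p i) ?J" if p: "p permutes ?J" for p
  proof -
    have "prod (\<lambda>i. ?N$i$p i) UNIV = prod (\<lambda>i. ?N$i$p i) ?J * prod (\<lambda>i. ?N$i$p i) (UNIV - ?J)"
      by (metis (no_types, lifting) finite prod.subset_diff subset_UNIV mult.commute)
    also have "prod (\<lambda>i. ?N$i$p i) (UNIV - ?J) = 1"
      using p by (intro prod.neutral) (auto simp: permutes_def column_rep_def mat_def)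
    also have "prod (\<lambda>i. ?N$i$p i) ?J = prod (\<lambda>i. M$i$p i) ?J"
      using p by (intro prod.cong) (auto simp: column_rep_def dest: permutes_in_image[THEN iffD2])
    finally show ?thesis by simp
  qed
  have "det ?N = sum ?t {p. p permutes UNIV}" by (simp add: det_def)
  also have "\<dots> = sum ?t {p. p permutes ?J}"
    apply (rule sum.mono_neutral_right)
      apply simp
     apply (auto intro: permutes_subset)[1]
    using z by blast
  also have "\<dots> = principal_minor M ?J"
    unfolding principal_minor_def by (intro sum.cong) (auto simp: eq)
  finally show ?thesis .
qed

lemma P_imp_W: "P_matrix M \<Longrightarrow> column_W_property (mat 1) M"
proof -
  assume P: "P_matrix M"
  have "principal_minor M J > 0" for J
  proof (cases "J = {}")
    case True then show ?thesis by (simp add: principal_minor_def)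
  next
    case False then show ?thesis using P by (simp add: P_matrix_def)
  qed
  then show ?thesis by (simp add: column_W_property_def det_column_rep_id)
qed



lemma inv_props: "invertible (M::real^'n^'n) \<Longrightarrow> M ** matrix_inv M = mat 1 \<and> matrix_inv M ** M = mat 1"
  unfolding invertible_def matrix_inv_def by (rule someI_ex)

definition vecm :: "real^'n^'n \<Rightarrow> real^('n \<times> 'n)" where
  "vecm D = (\<chi> p. D $ snd p $ fst p)"

lemma sum_delta_mult: "(\<Sum>q\<in>(UNIV::'a::finite set). (if p = q then c else 0) * (v q::real)) = c * v p"
proof -
  have "(\<Sum>q\<in>(UNIV::'a set). (if p = q then c else 0) * v q) = (\<Sum>q\<in>UNIV. if p = q then c * v q else 0)"
    by (rule sum.cong) auto
  also have "\<dots> = c * v p" by (simp add: sum.delta)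
  finally show ?thesis .
qed

lemma kron_vec:
  fixes M D :: "real^'n^'n"
  shows "kron (mat 1) M *v vecm D = vecm (M ** D)"
proof -
  have "(\<Sum>q\<in>UNIV. (mat 1 $ i $ fst q * M $ k $ snd q) * D $ snd q $ fst q)
        = (\<Sum>l\<in>UNIV. M $ k $ l * D $ l $ i)" for i k :: 'n
  proof -
    have "(\<Sum>q\<in>(UNIV::('n\<times>'n) set). (mat 1 $ i $ fst q * M $ k $ snd q) * D $ snd q $ fst q)
       = (\<Sum>j\<in>UNIV. \<Sum>l\<in>UNIV. (mat 1 $ i $ j * M $ k $ l) * D $ l $ j)"
      unfolding UNIV_Times_UNIV[symmetric] sum.cartesian_product by (simp add: case_prod_unfold)
    also have "\<dots> = (\<Sum>j\<in>UNIV. (if i = j then 1 else 0) * (\<Sum>l\<in>UNIV. M $ k $ l * D $ l $ j))"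
      by (simp add: mat_def sum_distrib_left mult.assoc)
    also have "\<dots> = (\<Sum>l\<in>UNIV. M $ k $ l * D $ l $ i)"
      by (simp only: sum_delta_mult)
    finally show ?thesis .
  qed
  then show ?thesis
    by (simp add: vec_eq_iff kron_def vecm_def matrix_vector_mult_def matrix_matrix_mult_def)
qed

lemma vecm_add: "vecm (a + b) = vecm a + vecm b" by (simp add: vecm_def vec_eq_iff)
lemma vecm_0: "vecm 0 = 0" by (simp add: vecm_def vec_eq_iff)
lemma vecm_eq0: "vecm D = 0 \<Longrightarrow> D = 0"
  by (simp add: vecm_def vec_eq_iff)

lemma vecm_diag: "vecm (\<chi> k l. t k l * D$k$l) = diagm (\<lambda>p. t (snd p) (fst p)) *v vecm D"
  by (simp add: vecm_def vec_eq_iff diagm_def matrix_vector_mult_def sum_delta_mult)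

lemma mm_diff: "(A::real^'n^'n) ** (B - C) = A ** B - A ** C"
  by (simp add: vec_eq_iff matrix_matrix_mult_def sum_subtractf algebra_simps)

lemma key:
  fixes R S :: "real^'m^'m"
  assumes conds:
      "column_W_property (R + S) (R - S)
       \<or> (invertible (R + S) \<and>
          column_W_property (mat 1) (matrix_inv (R + S) ** (R - S)))
       \<or> (invertible (R + S) \<and> P_matrix (matrix_inv (R + S) ** (R - S)))
       \<or> (\<forall>F1 F2 :: real^'m^'m.
            nonneg_diagonal F1 \<and> nonneg_diagonal F2 \<and> (\<forall>i. F1 $ i $ i + F2 $ i $ i > 0)
            \<longrightarrow> invertible ((R + S) ** F1 + (R - S) ** F2))"
    and F: "nonneg_diagonal F1" "nonneg_diagonal F2" "\<forall>i. F1 $ i $ i + F2 $ i $ i > 0"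
  shows "invertible ((R + S) ** F1 + (R - S) ** F2)"
proof -
  define d1 where "d1 = (\<lambda>i. F1$i$i)"
  define d2 where "d2 = (\<lambda>i. F2$i$i)"
  have F1e: "F1 = diagm d1" and F2e: "F2 = diagm d2"
    using nonneg_diag_eq[OF F(1)] nonneg_diag_eq[OF F(2)] by (simp_all add: d1_def d2_def)
  have dd: "\<And>j. d1 j \<ge> 0" "\<And>j. d2 j \<ge> 0" "\<And>j. d1 j + d2 j > 0"
    using F by (auto simp: d1_def d2_def nonneg_diagonal_def)
  have gen: "det (P ** F1 + Q ** F2) > 0" if "column_W_property P Q" for P Q :: "real^'m^'m"
  proof -
    have "P ** F1 + Q ** F2 = (\<chi> i j. P$i$j * d1 j + Q$i$j * d2 j)"
      by (simp add: F1e F2e mul_diagm vec_eq_iff)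
    then show ?thesis using det_comb[OF that dd] by simp
  qed
  have viaM: "invertible ((R + S) ** F1 + (R - S) ** F2)"
    if inv: "invertible (R + S)" and W: "column_W_property (mat 1) (matrix_inv (R + S) ** (R - S))"
  proof -
    let ?M = "matrix_inv (R + S) ** (R - S)"
    have "(R + S) ** (mat 1 ** F1 + ?M ** F2) = (R + S) ** F1 + (R - S) ** F2"
      using inv_props[OF inv] by (simp add: matrix_add_ldistrib matrix_mul_assoc)
    moreover have "det ((R + S) ** (mat 1 ** F1 + ?M ** F2)) \<noteq> 0"
      using gen[OF W] inv by (simp add: det_mul invertible_det_nz)
    ultimately show ?thesis by (simp add: invertible_det_nz)
  qed
  from conds show ?thesis
  proof (elim disjE conjE)
    assume "column_W_property (R + S) (R - S)"
    then show ?thesis using gen by (simp add: invertible_det_nz) (metis less_irrefl)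
  next
    assume "invertible (R + S)" "column_W_property (mat 1) (matrix_inv (R + S) ** (R - S))"
    then show ?thesis by (rule viaM)
  next
    assume "invertible (R + S)" "P_matrix (matrix_inv (R + S) ** (R - S))"
    then show ?thesis using viaM P_imp_W by blast
  next
    assume "\<forall>F1 F2 :: real^'m^'m.
            nonneg_diagonal F1 \<and> nonneg_diagonal F2 \<and> (\<forall>i. F1 $ i $ i + F2 $ i $ i > 0)
            \<longrightarrow> invertible ((R + S) ** F1 + (R - S) ** F2)"
    then show ?thesis using F by blast
  qed
qed

theorem theorem4p3:
  fixes A B C F :: "real^'n^'n"
  defines "R \<equiv> kron (mat 1 :: real^'n^'n) (A ** matrix_inv C)"
      and "S \<equiv> kron (mat 1 :: real^'n^'n) B"
  assumes invC: "invertible C"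
    and conds:
      "column_W_property (R + S) (R - S)
       \<or> (invertible (R + S) \<and>
          column_W_property (mat 1) (matrix_inv (R + S) ** (R - S)))
       \<or> (invertible (R + S) \<and> P_matrix (matrix_inv (R + S) ** (R - S)))
       \<or> (\<forall>F1 F2 :: real^('n \<times> 'n)^('n \<times> 'n).
            nonneg_diagonal F1 \<and> nonneg_diagonal F2 \<and> (\<forall>i. F1 $ i $ i + F2 $ i $ i > 0)
            \<longrightarrow> invertible ((R + S) ** F1 + (R - S) ** F2))"
  shows "\<exists>!X :: real^'n^'n. A ** X + B ** mabs (C ** X) = F"
proof -
  define G where "G X = A ** X + B ** mabs (C ** X)" for X :: "real^'n^'n"
  define Ci where "Ci = matrix_inv C"
  have ci: "C ** Ci = mat 1" "Ci ** C = mat 1" using inv_props[OF invC] by (simp_all add: Ci_def)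
  have inj: "inj G"
  proof (rule injI)
    fix X X' assume GX: "G X = G X'"
    define Y where "Y = C ** X"
    define Y' where "Y' = C ** X'"
    define D where "D = Y - Y'"
    have hX: "X = Ci ** Y" "X' = Ci ** Y'"
      using ci by (simp_all add: Y_def Y'_def matrix_mul_assoc)
    have "(A ** Ci) ** D = A ** X - A ** X'"
      by (simp add: D_def mm_diff hX matrix_mul_assoc)
    moreover have "B ** (mabs Y - mabs Y') = B ** mabs Y - B ** mabs Y'" by (rule mm_diff)
    ultimately have "(A ** Ci) ** D + B ** (mabs Y - mabs Y') = (A ** X + B ** mabs Y) - (A ** X' + B ** mabs Y')"
      by (simp only:) (simp add: algebra_simps)
    also have "\<dots> = 0" using GX by (simp add: G_def Y_def Y'_def)
    finally have eq0: "(A ** Ci) ** D + B ** (mabs Y - mabs Y') = 0" .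
    define t where "t k l = (if D$k$l = 0 then 0 else (\<bar>Y$k$l\<bar> - \<bar>Y'$k$l\<bar>) / D$k$l)" for k l
    have tb: "\<bar>t k l\<bar> \<le> 1" for k l
    proof (cases "D$k$l = 0")
      case True then show ?thesis by (simp add: t_def)
    next
      case False
      have "\<bar>\<bar>Y$k$l\<bar> - \<bar>Y'$k$l\<bar>\<bar> \<le> \<bar>D$k$l\<bar>"
        by (simp add: D_def abs_triangle_ineq3)
      then show ?thesis using False by (simp add: t_def abs_divide divide_le_eq_1)
    qed
    have E: "mabs Y - mabs Y' = (\<chi> k l. t k l * D$k$l)"
      by (simp add: vec_eq_iff mabs_def t_def D_def)
    define tt where "tt p = t (snd p) (fst p)" for p
    define f1 where "f1 p = (1 + tt p) / 2" for p
    define f2 where "f2 p = (1 - tt p) / 2" for p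
    have Req: "R + S ** diagm tt = (R + S) ** diagm f1 + (R - S) ** diagm f2"
      by (simp add: mul_diagm vec_eq_iff f1_def f2_def field_simps)
    have "invertible ((R + S) ** diagm f1 + (R - S) ** diagm f2)"
    proof (rule key[OF conds])
      show "nonneg_diagonal (diagm f1)" "nonneg_diagonal (diagm f2)"
        using tb by (auto simp: nonneg_diagonal_def diagm_def f1_def f2_def tt_def abs_le_iff
            intro: add_nonneg_nonneg) (smt (verit) tb)+
      show "\<forall>i. diagm f1 $ i $ i + diagm f2 $ i $ i > 0"
        by (simp add: diagm_def f1_def f2_def add_divide_distrib[symmetric])
    qed
    hence invM: "invertible (R + S ** diagm tt)" by (simp add: Req)
    have "(R + S ** diagm tt) *v vecm D = R *v vecm D + S *v (diagm tt *v vecm D)"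
      by (simp add: matrix_vector_mult_add_rdistrib matrix_vector_mul_assoc)
    also have "\<dots> = vecm ((A ** Ci) ** D) + vecm (B ** (mabs Y - mabs Y'))"
      unfolding E vecm_diag[symmetric] tt_def[abs_def] R_def S_def kron_vec Ci_def[symmetric]
      by (simp add: E)
    also have "\<dots> = 0" by (simp only: vecm_add[symmetric] eq0 vecm_0)
    finally have "(R + S ** diagm tt) *v vecm D = (R + S ** diagm tt) *v 0" by simp
    hence "vecm D = 0" using inj_matrix_vector_mult[OF invM] by (meson injD)
    hence "D = 0" by (rule vecm_eq0)
    hence "Y = Y'" by (simp add: D_def)
    thus "X = X'" using hX by simp
  qed
  have Geq: "G = (\<lambda>X. \<chi> i j. (\<Sum>k\<in>UNIV. A$i$k * X$k$j) + (\<Sum>k\<in>UNIV. B$i$k * \<bar>\<Sum>l\<in>UNIV. C$k$l * X$l$j\<bar>))"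
    by (simp add: fun_eq_iff G_def vec_eq_iff matrix_matrix_mult_def mabs_def)
  have cont: "continuous_on UNIV G"
    unfolding Geq by (intro continuous_intros)
  have hom: "G (c *\<^sub>R X) = c *\<^sub>R G X" if "c \<ge> 0" for c X
  proof -
    have sc: "M ** (c *\<^sub>R N) = c *\<^sub>R (M ** N)" for M N :: "real^'n^'n"
      by (simp add: matrix_scalar_ac scalar_matrix_assoc)
    have ma: "mabs (c *\<^sub>R N) = c *\<^sub>R mabs N" for N :: "real^'n^'n"
      using that by (simp add: mabs_def vec_eq_iff abs_mult)
    show ?thesis by (simp add: G_def sc ma scaleR_right_distrib)
  qed
  have "surj G" by (rule surj_inj_hom[OF cont inj hom])
  then obtain X where "G X = F" by (metis surjD)
  moreover have "\<And>X'. G X' = F \<Longrightarrow> X' = X" using inj \<open>G X = F\<close> by (metis injD)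
  ultimately show ?thesis unfolding G_def by blast
qed

end
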